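(* Let $F$ be a field and consider seven lines $l_x,l_y,l_z,l_1,l_2,l_3,l_4$ in the plane $F^2$ such that for each $i\in\{1,2,3,4\}$ the line $l_i$ meets each of $l_x,l_y,l_z$ in exactly one point. For $i\in\{1,2,3,4\}$ let $x_i,y_i,z_i$ be the first coordinates (projections onto the $x$-axis) of the intersection points of $l_i$ with $l_x$, $l_y$, $l_z$ respectively. Then $$\det\begin{pmatrix} x_1-y_1 & x_1-z_1 & z_1(x_1-y_1) & y_1(x_1-z_1)\\ x_2-y_2 & x_2-z_2 & z_2(x_2-y_2) & y_2(x_2-z_2)\\ x_3-y_3 & x_3-z_3 & z_3(x_3-y_3) & y_3(x_3-z_3)\\ x_4-y_4 & x_4-z_4 & z_4(x_4-y_4) & y_4(x_4-z_4) \end{pmatrix}=0.$$ *)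

theory Defs
  imports "HOL-Analysis.Analysis"
begin

definition is_line :: "('a::field \<times> 'a) set \<Rightarrow> bool" where
  "is_line L \<longleftrightarrow> (\<exists>a b c. (a \<noteq> 0 \<or> b \<noteq> 0) \<and> L = {(x, y). a * x + b * y = c})"

definition meet_once :: "('a \<times> 'a) set \<Rightarrow> ('a \<times> 'a) set \<Rightarrow> bool" where
  "meet_once L M \<longleftrightarrow> (\<exists>!p. p \<in> L \<inter> M)"

definition meet_x :: "('a \<times> 'a) set \<Rightarrow> ('a \<times> 'a) set \<Rightarrow> 'a" where
  "meet_x L M = fst (THE p. p \<in> L \<inter> M)"

end

theory Submission
  imports Defs
begin

lemma vector_4:
 "(vector [a,b,c,d] ::('a::zero)^4)$1 = a"
 "(vector [a,b,c,d] ::('a::zero)^4)$2 = b"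
 "(vector [a,b,c,d] ::('a::zero)^4)$3 = c"
 "(vector [a,b,c,d] ::('a::zero)^4)$4 = d"
  unfolding vector_def by simp_all

lemma det_kernel:
  fixes A :: "'a::field^'n^'n"
  assumes "v \<noteq> 0" "A *v v = 0"
  shows "det A = 0"
proof (rule ccontr)
  assume "det A \<noteq> 0"
  then have "invertible A" using invertible_det_nz by blast
  then obtain B where B: "B ** A = mat 1" unfolding invertible_def by blast
  have "v = (B ** A) *v v" using B by simp
  also have "\<dots> = B *v (A *v v)" by (simp add: matrix_vector_mul_assoc)
  also have "\<dots> = 0" using assms(2) by simp
  finally show False using assms(1) by simp
qed

lemma det_rel:
  fixes x y z :: "4 \<Rightarrow> 'a::field"
  assumes "w1 \<noteq> 0 \<or> w2 \<noteq> 0 \<or> w3 \<noteq> 0 \<or> w4 \<noteq> 0"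
    and "\<And>i. w1*(x i - y i) + w2*(x i - z i) + w3*(z i * (x i - y i)) + w4*(y i * (x i - z i)) = 0"
  shows "det ((\<chi> i. vector [x i - y i, x i - z i, z i * (x i - y i), y i * (x i - z i)]) :: 'a^4^4) = 0"
proof (rule det_kernel)
  show "(vector [w1,w2,w3,w4] :: 'a^4) \<noteq> 0"
    using assms(1) by (metis vector_4 zero_index)
  show "(\<chi> i. vector [x i - y i, x i - z i, z i * (x i - y i), y i * (x i - z i)]) *v (vector [w1,w2,w3,w4] :: 'a^4) = 0"
    using assms(2) by (simp add: vec_eq_iff matrix_vector_mult_def sum_4 vector_4 mult.commute)
qed


lemma row_gen:
  fixes p q r x y z Y1 Y2 Y3 a1 b1 c1 a2 b2 c2 a3 b3 c3 :: "'a::field"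
  assumes pq: "p \<noteq> 0 \<or> q \<noteq> 0"
    and h1: "p*x+q*Y1=r" and h2: "p*y+q*Y2=r" and h3: "p*z+q*Y3=r"
    and g1: "a1*x+b1*Y1=c1" and g2: "a2*y+b2*Y2=c2" and g3: "a3*z+b3*Y3=c3"
  shows "b2*(c1*b3-b1*c3)*(x-y) + (-(b3*(c1*b2-b1*c2)))*(x-z) + b2*(a3*b1-a1*b3)*(z*(x-y)) + b3*(a1*b2-a2*b1)*(y*(x-z)) = 0"
proof -
  define M where "M = x*(Y2-Y3) - Y1*(y-z) + (y*Y3 - z*Y2)"
  have "p*M = (Y2-Y3)*(p*x+q*Y1-r) - (Y1-Y3)*(p*y+q*Y2-r) + (Y1-Y2)*(p*z+q*Y3-r)"
    unfolding M_def by algebra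
  then have pM: "p*M = 0" using h1 h2 h3 by simp
  have "q*M = -(y-z)*(p*x+q*Y1-r) + (x-z)*(p*y+q*Y2-r) - (x-y)*(p*z+q*Y3-r)"
    unfolding M_def by algebra
  then have qM: "q*M = 0" using h1 h2 h3 by simp
  have M0: "M = 0" using pM qM pq by auto
  have "b2*(c1*b3-b1*c3)*(x-y) + (-(b3*(c1*b2-b1*c2)))*(x-z) + b2*(a3*b1-a1*b3)*(z*(x-y)) + b3*(a1*b2-a2*b1)*(y*(x-z))
     = b1*b2*b3*M"
    unfolding M_def g1[symmetric] g2[symmetric] g3[symmetric] by algebra
  then show ?thesis using M0 by simp
qed


theorem proposition5:
  fixes lx ly lz :: "('a::field \<times> 'a) set"
    and l :: "4 \<Rightarrow> ('a \<times> 'a) set"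
  assumes "is_line lx" "is_line ly" "is_line lz"
    and "\<And>i. is_line (l i)"
    and "\<And>i. meet_once (l i) lx \<and> meet_once (l i) ly \<and> meet_once (l i) lz"
  shows "let x = (\<lambda>i. meet_x (l i) lx); y = (\<lambda>i. meet_x (l i) ly); z = (\<lambda>i. meet_x (l i) lz)
         in det ((\<chi> i. vector [x i - y i, x i - z i, z i * (x i - y i), y i * (x i - z i)])
                   :: 'a^4^4) = 0"
proof -
  obtain a1 b1 c1 where L1: "a1 \<noteq> 0 \<or> b1 \<noteq> 0" and E1: "lx = {(x,y). a1*x+b1*y=c1}"
    using assms(1) unfolding is_line_def by blast
  obtain a2 b2 c2 where L2: "a2 \<noteq> 0 \<or> b2 \<noteq> 0" and E2: "ly = {(x,y). a2*x+b2*y=c2}"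
    using assms(2) unfolding is_line_def by blast
  obtain a3 b3 c3 where L3: "a3 \<noteq> 0 \<or> b3 \<noteq> 0" and E3: "lz = {(x,y). a3*x+b3*y=c3}"
    using assms(3) unfolding is_line_def by blast
  define P1 where "P1 i = (THE p. p \<in> l i \<inter> lx)" for i
  define P2 where "P2 i = (THE p. p \<in> l i \<inter> ly)" for i
  define P3 where "P3 i = (THE p. p \<in> l i \<inter> lz)" for i
  have P1: "P1 i \<in> l i \<inter> lx" for i
    unfolding P1_def by (rule theI') (use assms(5)[of i] in \<open>simp add: meet_once_def\<close>)
  have P2: "P2 i \<in> l i \<inter> ly" for i
    unfolding P2_def by (rule theI') (use assms(5)[of i] in \<open>simp add: meet_once_def\<close>)
  have P3: "P3 i \<in> l i \<inter> lz" for i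
    unfolding P3_def by (rule theI') (use assms(5)[of i] in \<open>simp add: meet_once_def\<close>)
  have U2: "p = P2 i" if "p \<in> l i \<inter> ly" for p i
    unfolding P2_def by (rule the1_equality[symmetric]) (use assms(5)[of i] that in \<open>simp_all add: meet_once_def\<close>)
  define x where "x i = meet_x (l i) lx" for i
  define y where "y i = meet_x (l i) ly" for i
  define z where "z i = meet_x (l i) lz" for i
  have xP: "x i = fst (P1 i)" for i unfolding x_def meet_x_def P1_def ..
  have yP: "y i = fst (P2 i)" for i unfolding y_def meet_x_def P2_def ..
  have zP: "z i = fst (P3 i)" for i unfolding z_def meet_x_def P3_def ..
  have g1: "a1 * x i + b1 * snd (P1 i) = c1" for i
    using P1[of i] unfolding E1 xP by (cases "P1 i") auto
  have g2: "a2 * y i + b2 * snd (P2 i) = c2" for i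
    using P2[of i] unfolding E2 yP by (cases "P2 i") auto
  have g3: "a3 * z i + b3 * snd (P3 i) = c3" for i
    using P3[of i] unfolding E3 zP by (cases "P3 i") auto
  have onl: "\<exists>p q r. (p \<noteq> 0 \<or> q \<noteq> 0) \<and> p * x i + q * snd (P1 i) = r
      \<and> p * y i + q * snd (P2 i) = r \<and> p * z i + q * snd (P3 i) = r" for i
  proof -
    obtain p q r where pq: "p \<noteq> 0 \<or> q \<noteq> 0" and E: "l i = {(x,y). p*x+q*y=r}"
      using assms(4)[of i] unfolding is_line_def by blast
    have "p * x i + q * snd (P1 i) = r" using P1[of i] unfolding E xP by (cases "P1 i") auto
    moreover have "p * y i + q * snd (P2 i) = r" using P2[of i] unfolding E yP by (cases "P2 i") auto
    moreover have "p * z i + q * snd (P3 i) = r" using P3[of i] unfolding E zP by (cases "P3 i") auto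
    ultimately show ?thesis using pq by blast
  qed
  have "\<exists>w1 w2 w3 w4. (w1 \<noteq> 0 \<or> w2 \<noteq> 0 \<or> w3 \<noteq> 0 \<or> w4 \<noteq> 0) \<and>
     (\<forall>i. w1*(x i - y i) + w2*(x i - z i) + w3*(z i * (x i - y i)) + w4*(y i * (x i - z i)) = 0)"
  proof (cases "b1 = 0")
    case True
    then have a1: "a1 \<noteq> 0" and ax: "\<And>i. a1 * x i = c1" using L1 g1 by auto
    have "c1*(x i - y i) + (-c1)*(x i - z i) + (-a1)*(z i * (x i - y i)) + a1*(y i * (x i - z i))
       = (c1 - a1 * x i) * (z i - y i)" for i by algebra
    then show ?thesis using a1 ax by (intro exI[of _ c1] exI[of _ "-c1"] exI[of _ "-a1"] exI[of _ a1]) auto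
  next
    case b1: False
    show ?thesis
    proof (cases "b2 = 0")
      case True
      then have a2: "a2 \<noteq> 0" and ay: "\<And>i. a2 * y i = c2" using L2 g2 by auto
      have "0*(x i - y i) + (-c2)*(x i - z i) + 0*(z i * (x i - y i)) + a2*(y i * (x i - z i))
         = (a2 * y i - c2) * (x i - z i)" for i by algebra
      then show ?thesis using a2 ay by (intro exI[of _ 0] exI[of _ "-c2"] exI[of _ 0] exI[of _ a2]) auto
    next
      case b2: False
      show ?thesis
      proof (cases "b3 = 0")
        case True
        then have a3: "a3 \<noteq> 0" and az: "\<And>i. a3 * z i = c3" using L3 g3 by auto
        have "(-c3)*(x i - y i) + 0*(x i - z i) + a3*(z i * (x i - y i)) + 0*(y i * (x i - z i))
           = (a3 * z i - c3) * (x i - y i)" for i by algebra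
        then show ?thesis using a3 az by (intro exI[of _ "-c3"] exI[of _ 0] exI[of _ a3] exI[of _ 0]) auto
      next
        case b3: False
        define w1 where "w1 = b2*(c1*b3-b1*c3)"
        define w2 where "w2 = -(b3*(c1*b2-b1*c2))"
        define w3 where "w3 = b2*(a3*b1-a1*b3)"
        define w4 where "w4 = b3*(a1*b2-a2*b1)"
        show ?thesis
        proof (cases "w1 \<noteq> 0 \<or> w2 \<noteq> 0 \<or> w3 \<noteq> 0 \<or> w4 \<noteq> 0")
          case True
          have "w1*(x i - y i) + w2*(x i - z i) + w3*(z i * (x i - y i)) + w4*(y i * (x i - z i)) = 0" for i
          proof -
            obtain p q r where "p \<noteq> 0 \<or> q \<noteq> 0" "p * x i + q * snd (P1 i) = r"
              "p * y i + q * snd (P2 i) = r" "p * z i + q * snd (P3 i) = r" using onl[of i] by blast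
            from row_gen[OF this g1[of i] g2[of i] g3[of i]] show ?thesis
              unfolding w1_def w2_def w3_def w4_def .
          qed
          then show ?thesis using True by blast
        next
          case False
          then have e2: "c1*b2 = b1*c2" and e4: "a1*b2 = a2*b1"
            unfolding w2_def w4_def using b2 b3 by auto
          have "x i = y i" for i
          proof -
            have "b1 * (a2 * x i + b2 * snd (P1 i)) = b2 * (a1 * x i + b1 * snd (P1 i))"
              using e4 by algebra
            also have "\<dots> = b1 * c2" using g1[of i] e2 by (simp add: mult.commute)
            finally have "a2 * x i + b2 * snd (P1 i) = c2" using b1 by simp
            then have "P1 i \<in> l i \<inter> ly" using P1[of i] unfolding E2 xP by (cases "P1 i") auto
            then have "P1 i = P2 i" by (rule U2)
            then show ?thesis using xP yP by simp
          qed
          then show ?thesis by (intro exI[of _ 1] exI[of _ 0]) auto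
        qed
      qed
    qed
  qed
  then obtain w1 w2 w3 w4 where "w1 \<noteq> 0 \<or> w2 \<noteq> 0 \<or> w3 \<noteq> 0 \<or> w4 \<noteq> 0"
    "\<And>i. w1*(x i - y i) + w2*(x i - z i) + w3*(z i * (x i - y i)) + w4*(y i * (x i - z i)) = 0" by blast
  from det_rel[OF this] show ?thesis unfolding Let_def x_def y_def z_def .
qed

end
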